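(* Let $\sigma(x,y)=(x\rightharpoonup y,x\leftharpoonup y)$ be a left-non-degenerate involutive quiver-theoretic Yang--Baxter map on a quiver $\mathscr{A}$ over $\Lambda$. For $x,y\in\mathscr{A}$ with $\mathfrak{s}(x)=\mathfrak{s}(y)$ set $x\star y:=(x\rightharpoonup\cdot)^{-1}(y)$. Then $(\mathscr{A},\star)$ is a left-non-degenerate weak RC-system, and $x\star y$ is defined whenever $\mathfrak{s}(x)=\mathfrak{s}(y)$.
   Context: A quiver over $\Lambda$ has source/target maps $\mathfrak{s},\mathfrak{t}$; $Q(\lambda,\Lambda)$ denotes arrows with source $\lambda$, $Q(\Lambda,\mu)$ arrows with target $\mu$. A quiver-theoretic Yang--Baxter map is a source/target-preserving map $\sigma$ on composable pairs $\mathscr{A}\otimes\mathscr{A}$ satisfying $(\sigma\otimes\mathrm{id})(\mathrm{id}\otimes\sigma)(\sigma\otimes\mathrm{id})=(\mathrm{id}\otimes\sigma)(\sigma\otimes\mathrm{id})(\mathrm{id}\otimes\sigma)$; involutive: $\sigma^2=\mathrm{id}$; left-non-degenerate: each $x\rightharpoonup\cdot\colon\mathscr{A}(\mathfrak{t}(x),\Lambda)\to\mathscr{A}(\mathfrak{s}(x),\Lambda)$ is bijective. A weak RC-system $(Q,\star)$ is a quiver $Q$ with a partially defined binary operation $\star$ such that: $x\star y$ is defined only if $\mathfrak{s}(x)=\mathfrak{s}(y)$; whenever $x\star y$ is defined, $y\star x$ is defined, $\mathfrak{s}(x\star y)=\mathfrak{t}(x)$, $\mathfrak{s}(y\star x)=\mathfrak{t}(y)$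 and $\mathfrak{t}(x\star y)=\mathfrak{t}(y\star x)$; and whenever $x\star y$, $x\star z$, $(x\star y)\star(x\star z)$ are defined, then $y\star z$ and $(y\star x)\star(y\star z)$ are defined and $(x\star y)\star(x\star z)=(y\star x)\star(y\star z)$ (RC-law). It is left-non-degenerate if every map $x\star\cdot\colon Q(\mathfrak{s}(x),\Lambda)\to Q(\mathfrak{t}(x),\Lambda)$ is a bijection. *)

theory Defs
  imports Main
begin

definition quiver :: "'v set \<Rightarrow> 'a set \<Rightarrow> ('a \<Rightarrow> 'v) \<Rightarrow> ('a \<Rightarrow> 'v) \<Rightarrow> bool" where
  "quiver Lam A s t \<longleftrightarrow> (\<forall>x\<in>A. s x \<in> Lam \<and> t x \<in> Lam)"

definition composable :: "'a set \<Rightarrow> ('a \<Rightarrow> 'v) \<Rightarrow> ('a \<Rightarrow> 'v) \<Rightarrow> ('a \<times> 'a) set" where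
  "composable A s t = {(x, y). x \<in> A \<and> y \<in> A \<and> t x = s y}"

definition sig12 :: "('a \<times> 'a \<Rightarrow> 'a \<times> 'a) \<Rightarrow> 'a \<times> 'a \<times> 'a \<Rightarrow> 'a \<times> 'a \<times> 'a" where
  "sig12 \<sigma> p = (case p of (x, y, z) \<Rightarrow> (fst (\<sigma> (x, y)), snd (\<sigma> (x, y)), z))"

definition sig23 :: "('a \<times> 'a \<Rightarrow> 'a \<times> 'a) \<Rightarrow> 'a \<times> 'a \<times> 'a \<Rightarrow> 'a \<times> 'a \<times> 'a" where
  "sig23 \<sigma> p = (case p of (x, y, z) \<Rightarrow> (x, fst (\<sigma> (y, z)), snd (\<sigma> (y, z))))"

text \<open>Writing \<sigma>(x,y) = (x \<rightharpoonup> y, x \<leftharpoonup> y),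
  the first component is fst (\<sigma> (x,y)).\<close>
definition quiver_YB_map ::
  "'v set \<Rightarrow> 'a set \<Rightarrow> ('a \<Rightarrow> 'v) \<Rightarrow> ('a \<Rightarrow> 'v) \<Rightarrow> ('a \<times> 'a \<Rightarrow> 'a \<times> 'a) \<Rightarrow> bool" where
  "quiver_YB_map Lam A s t \<sigma> \<longleftrightarrow>
     quiver Lam A s t \<and>
     (\<forall>x y. (x, y) \<in> composable A s t \<longrightarrow>
        \<sigma> (x, y) \<in> composable A s t \<and>
        s (fst (\<sigma> (x, y))) = s x \<and> t (snd (\<sigma> (x, y))) = t y) \<and>
     (\<forall>x y z. x \<in> A \<and> y \<in> A \<and> z \<in> A \<and> t x = s y \<and> t y = s z \<longrightarrow>
        sig12 \<sigma> (sig23 \<sigma> (sig12 \<sigma> (x, y, z))) = sig23 \<sigma> (sig12 \<sigma> (sig23 \<sigma> (x, y, z))))"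

definition involutive_YB :: "'a set \<Rightarrow> ('a \<Rightarrow> 'v) \<Rightarrow> ('a \<Rightarrow> 'v) \<Rightarrow> ('a \<times> 'a \<Rightarrow> 'a \<times> 'a) \<Rightarrow> bool" where
  "involutive_YB A s t \<sigma> \<longleftrightarrow> (\<forall>p \<in> composable A s t. \<sigma> (\<sigma> p) = p)"

definition left_nondeg_YB :: "'a set \<Rightarrow> ('a \<Rightarrow> 'v) \<Rightarrow> ('a \<Rightarrow> 'v) \<Rightarrow> ('a \<times> 'a \<Rightarrow> 'a \<times> 'a) \<Rightarrow> bool" where
  "left_nondeg_YB A s t \<sigma> \<longleftrightarrow>
     (\<forall>x\<in>A. bij_betw (\<lambda>y. fst (\<sigma> (x, y))) {y \<in> A. s y = t x} {y \<in> A. s y = s x})"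

definition star_of ::
  "'a set \<Rightarrow> ('a \<Rightarrow> 'v) \<Rightarrow> ('a \<Rightarrow> 'v) \<Rightarrow> ('a \<times> 'a \<Rightarrow> 'a \<times> 'a) \<Rightarrow> 'a \<Rightarrow> 'a \<Rightarrow> 'a option" where
  "star_of A s t \<sigma> x y =
     (if x \<in> A \<and> y \<in> A \<and> s x = s y
      then Some (inv_into {z \<in> A. s z = t x} (\<lambda>z. fst (\<sigma> (x, z))) y)
      else None)"

definition weak_RC_system ::
  "'v set \<Rightarrow> 'a set \<Rightarrow> ('a \<Rightarrow> 'v) \<Rightarrow> ('a \<Rightarrow> 'v) \<Rightarrow> ('a \<Rightarrow> 'a \<Rightarrow> 'a option) \<Rightarrow> bool" where
  "weak_RC_system Lam A s t op \<longleftrightarrow>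
     quiver Lam A s t \<and>
     (\<forall>x y u. op x y = Some u \<longrightarrow> x \<in> A \<and> y \<in> A \<and> u \<in> A \<and> s x = s y) \<and>
     (\<forall>x y u. op x y = Some u \<longrightarrow>
        (\<exists>v. op y x = Some v \<and> s u = t x \<and> s v = t y \<and> t u = t v)) \<and>
     (\<forall>x y z u w r. op x y = Some u \<and> op x z = Some w \<and> op u w = Some r \<longrightarrow>
        (\<exists>p q. op y z = Some q \<and> op y x = Some p \<and> op p q = Some r))"

definition left_nondeg_RC ::
  "'a set \<Rightarrow> ('a \<Rightarrow> 'v) \<Rightarrow> ('a \<Rightarrow> 'v) \<Rightarrow> ('a \<Rightarrow> 'a \<Rightarrow> 'a option) \<Rightarrow> bool" where
  "left_nondeg_RC A s t op \<longleftrightarrow>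
     (\<forall>x\<in>A. (\<forall>y \<in> {y \<in> A. s y = s x}. op x y \<noteq> None) \<and>
        bij_betw (\<lambda>y. the (op x y)) {y \<in> A. s y = s x} {z \<in> A. s z = t x})"

end

theory Submission
  imports Defs
begin

context
  fixes Lam :: "'v set" and A :: "'a set" and s t :: "'a \<Rightarrow> 'v"
    and \<sigma> :: "'a \<times> 'a \<Rightarrow> 'a \<times> 'a"
  assumes yb: "quiver_YB_map Lam A s t \<sigma>"
    and inv: "involutive_YB A s t \<sigma>"
    and nd: "left_nondeg_YB A s t \<sigma>"
begin

abbreviation "S x y \<equiv> inv_into {z \<in> A. s z = t x} (\<lambda>z. fst (\<sigma> (x, z))) y"

lemma comp:
  assumes "x \<in> A" "y \<in> A" "t x = s y"
  shows "fst (\<sigma> (x,y)) \<in> A" "snd (\<sigma> (x,y)) \<in> A" "t (fst (\<sigma> (x,y))) = s (snd (\<sigma> (x,y)))"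
    "s (fst (\<sigma> (x, y))) = s x" "t (snd (\<sigma> (x, y))) = t y"
proof -
  have "\<forall>x y. (x, y) \<in> composable A s t \<longrightarrow>
        \<sigma> (x, y) \<in> composable A s t \<and>
        s (fst (\<sigma> (x, y))) = s x \<and> t (snd (\<sigma> (x, y))) = t y"
    using yb unfolding quiver_YB_map_def by (elim conjE)
  moreover have "(x, y) \<in> composable A s t" using assms unfolding composable_def by simp
  ultimately have h: "\<sigma> (x, y) \<in> composable A s t"
     "s (fst (\<sigma> (x, y))) = s x" "t (snd (\<sigma> (x, y))) = t y" by blast+
  obtain a b where ab: "\<sigma> (x, y) = (a, b)" by (cases "\<sigma> (x, y)")
  show "fst (\<sigma> (x,y)) \<in> A" "snd (\<sigma> (x,y)) \<in> A" "t (fst (\<sigma> (x,y))) = s (snd (\<sigma> (x,y)))"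
    using h(1) unfolding ab composable_def by auto
  show "s (fst (\<sigma> (x, y))) = s x" "t (snd (\<sigma> (x, y))) = t y" using h(2,3) .
qed

lemma star_prop:
  assumes "x \<in> A" "y \<in> A" "s x = s y"
  shows "S x y \<in> A" "s (S x y) = t x" "fst (\<sigma> (x, S x y)) = y"
proof -
  have b: "bij_betw (\<lambda>z. fst (\<sigma> (x, z))) {z \<in> A. s z = t x} {z \<in> A. s z = s x}"
    using nd assms unfolding left_nondeg_YB_def by blast
  have y: "y \<in> (\<lambda>z. fst (\<sigma> (x, z))) ` {z \<in> A. s z = t x}"
    using bij_betw_imp_surj_on[OF b] assms by auto
  show "S x y \<in> A" "s (S x y) = t x" using inv_into_into[OF y] by auto
  show "fst (\<sigma> (x, S x y)) = y" using f_inv_into_f[OF y] by simp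
qed

lemma star_uniq:
  assumes "x \<in> A" "z \<in> A" "s z = t x"
  shows "S x (fst (\<sigma> (x, z))) = z"
proof -
  have b: "bij_betw (\<lambda>z. fst (\<sigma> (x, z))) {z \<in> A. s z = t x} {z \<in> A. s z = s x}"
    using nd assms unfolding left_nondeg_YB_def by blast
  show ?thesis using inv_into_f_f[OF bij_betw_imp_inj_on[OF b]] assms by auto
qed

lemma swap:
  assumes "x \<in> A" "y \<in> A" "s x = s y"
  shows "S y x = snd (\<sigma> (x, S x y))"
proof -
  let ?u = "S x y"
  let ?v = "snd (\<sigma> (x, ?u))"
  have u: "?u \<in> A" "s ?u = t x" "fst (\<sigma> (x, ?u)) = y" using star_prop assms by auto
  have e: "\<sigma> (x, ?u) = (y, ?v)" using u(3) by (metis prod.collapse)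
  have "(x, ?u) \<in> composable A s t" using u assms unfolding composable_def by auto
  then have "\<sigma> (\<sigma> (x, ?u)) = (x, ?u)" using inv unfolding involutive_YB_def by blast
  then have fx: "fst (\<sigma> (y, ?v)) = x" using e by simp
  have v: "?v \<in> A" "s ?v = t y" using comp[of x ?u] u assms by auto
  show ?thesis using star_uniq[OF assms(2) v] fx by simp
qed

lemma rc:
  assumes "x \<in> A" "y \<in> A" "z \<in> A" "s x = s y" "s x = s z"
  shows "S (S y x) (S y z) = S (S x y) (S x z)"
proof -
  define u where "u = S x y"
  define w where "w = S x z"
  define p where "p = S y x"
  define r where "r = S u w"
  have u: "u \<in> A" "s u = t x" "fst (\<sigma> (x, u)) = y"
    unfolding u_def by (rule star_prop[OF assms(1,2,4)])+
  have w: "w \<in> A" "s w = t x" "fst (\<sigma> (x, w)) = z"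
    unfolding w_def by (rule star_prop[OF assms(1,3,5)])+
  have uw: "s u = s w" using u w by simp
  have r: "r \<in> A" "s r = t u" "fst (\<sigma> (u, r)) = w"
    unfolding r_def by (rule star_prop[OF u(1) w(1) uw])+
  have p: "p = snd (\<sigma> (x, u))" unfolding p_def u_def by (rule swap[OF assms(1,2,4)])
  have pA: "p \<in> A" "s p = t y" "t p = t u" using comp[OF assms(1) u(1)] u(2) unfolding p[symmetric] u(3)
    by auto
  have e1: "\<sigma> (x, u) = (y, p)" using u(3) p by (metis prod.collapse)
  have e2: "\<sigma> (u, r) = (w, snd (\<sigma> (u, r)))" using r(3) by (metis prod.collapse)
  have e3: "fst (\<sigma> (x, w)) = z" using w by simp
  have ybe: "sig12 \<sigma> (sig23 \<sigma> (sig12 \<sigma> (x, u, r))) = sig23 \<sigma> (sig12 \<sigma> (sig23 \<sigma> (x, u, r)))"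
  proof -
    have "\<forall>x y z. x \<in> A \<and> y \<in> A \<and> z \<in> A \<and> t x = s y \<and> t y = s z \<longrightarrow>
        sig12 \<sigma> (sig23 \<sigma> (sig12 \<sigma> (x, y, z))) = sig23 \<sigma> (sig12 \<sigma> (sig23 \<sigma> (x, y, z)))"
      using yb unfolding quiver_YB_map_def by (elim conjE)
    then show ?thesis using assms(1) u(1,2) r(1,2) by simp
  qed
  have "fst (sig12 \<sigma> (sig23 \<sigma> (sig12 \<sigma> (x, u, r)))) = fst (\<sigma> (y, fst (\<sigma> (p, r))))"
    using e1 by (simp add: sig12_def sig23_def case_prod_beta)
  moreover have "fst (sig23 \<sigma> (sig12 \<sigma> (sig23 \<sigma> (x, u, r)))) = z"
    using r(3) e3 by (simp add: sig12_def sig23_def case_prod_beta)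
  ultimately have yz: "fst (\<sigma> (y, fst (\<sigma> (p, r)))) = z" using ybe by simp
  have pr: "fst (\<sigma> (p, r)) \<in> A" "s (fst (\<sigma> (p, r))) = t y"
    using comp[of p r] pA r by auto
  have q: "S y z = fst (\<sigma> (p, r))" using star_uniq[OF assms(2) pr] yz by simp
  have "S p (fst (\<sigma> (p, r))) = r" using star_uniq[OF pA(1) r(1)] r pA by simp
  then show ?thesis using q p_def r_def u_def w_def by simp
qed

end

theorem proposition5p1:
  fixes Lam :: "'v set" and A :: "'a set" and s t :: "'a \<Rightarrow> 'v"
    and \<sigma> :: "'a \<times> 'a \<Rightarrow> 'a \<times> 'a"
  assumes "quiver_YB_map Lam A s t \<sigma>"
    and "involutive_YB A s t \<sigma>"
    and "left_nondeg_YB A s t \<sigma>"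
  shows "weak_RC_system Lam A s t (star_of A s t \<sigma>)
    \<and> left_nondeg_RC A s t (star_of A s t \<sigma>)
    \<and> (\<forall>x\<in>A. \<forall>y\<in>A. s x = s y \<longrightarrow> star_of A s t \<sigma> x y \<noteq> None)"
proof -
  note sp = star_prop[OF assms]
  note sw = swap[OF assms]
  note rcl = rc[OF assms]
  note cp = comp[OF assms]
  have q: "quiver Lam A s t" using assms(1) unfolding quiver_YB_map_def by blast
  have W1: "\<forall>x y u. star_of A s t \<sigma> x y = Some u \<longrightarrow> x \<in> A \<and> y \<in> A \<and> u \<in> A \<and> s x = s y"
  proof (intro allI impI)
    fix x y u assume h: "star_of A s t \<sigma> x y = Some u"
    then have xy: "x \<in> A" "y \<in> A" "s x = s y" and ud: "u = S A s t \<sigma> x y"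
      by (auto simp: star_of_def split: if_splits)
    show "x \<in> A \<and> y \<in> A \<and> u \<in> A \<and> s x = s y" using sp(1)[OF xy] xy ud by simp
  qed
  have W2: "\<forall>x y u. star_of A s t \<sigma> x y = Some u \<longrightarrow>
        (\<exists>v. star_of A s t \<sigma> y x = Some v \<and> s u = t x \<and> s v = t y \<and> t u = t v)"
  proof (intro allI impI)
    fix x y u assume h: "star_of A s t \<sigma> x y = Some u"
    then have xy: "x \<in> A" "y \<in> A" "s x = s y" and ud: "u = S A s t \<sigma> x y"
      by (auto simp: star_of_def split: if_splits)
    have u: "u \<in> A" "s u = t x" "fst (\<sigma> (x, u)) = y" unfolding ud by (rule sp[OF xy])+
    have v: "S A s t \<sigma> y x = snd (\<sigma> (x, u))" unfolding ud by (rule sw[OF xy])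
    show "\<exists>v. star_of A s t \<sigma> y x = Some v \<and> s u = t x \<and> s v = t y \<and> t u = t v"
    proof (intro exI conjI)
      show "star_of A s t \<sigma> y x = Some (S A s t \<sigma> y x)" using xy by (simp add: star_of_def)
      show "s u = t x" by (rule u(2))
      show "s (S A s t \<sigma> y x) = t y" using sp(2)[of y x] xy by simp
      show "t u = t (S A s t \<sigma> y x)" using v cp(5)[OF xy(1) u(1) u(2)[symmetric]] by simp
    qed
  qed
  have W3: "\<forall>x y z u w r. star_of A s t \<sigma> x y = Some u \<and> star_of A s t \<sigma> x z = Some w
        \<and> star_of A s t \<sigma> u w = Some r \<longrightarrow>
        (\<exists>p q. star_of A s t \<sigma> y z = Some q \<and> star_of A s t \<sigma> y x = Some p
           \<and> star_of A s t \<sigma> p q = Some r)"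
  proof (intro allI impI)
    fix x y z u w r
    assume h: "star_of A s t \<sigma> x y = Some u \<and> star_of A s t \<sigma> x z = Some w
        \<and> star_of A s t \<sigma> u w = Some r"
    then have xy: "x \<in> A" "y \<in> A" "z \<in> A" "s x = s y" "s x = s z"
      and ud: "u = S A s t \<sigma> x y" and wd: "w = S A s t \<sigma> x z" and rd: "r = S A s t \<sigma> u w"
      by (auto simp: star_of_def split: if_splits)
    have yx: "s y = s x" using xy by simp
    have p: "S A s t \<sigma> y x \<in> A" "s (S A s t \<sigma> y x) = t y" by (rule sp[OF xy(2,1) yx])+
    have qq: "S A s t \<sigma> y z \<in> A" "s (S A s t \<sigma> y z) = t y"
      using sp[of y z] xy by auto
    have e: "S A s t \<sigma> (S A s t \<sigma> y x) (S A s t \<sigma> y z) = r" unfolding ud wd rd by (rule rcl[OF xy])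
    show "\<exists>p q. star_of A s t \<sigma> y z = Some q \<and> star_of A s t \<sigma> y x = Some p
           \<and> star_of A s t \<sigma> p q = Some r"
    proof (intro exI conjI)
      show "star_of A s t \<sigma> y z = Some (S A s t \<sigma> y z)" using xy by (simp add: star_of_def)
      show "star_of A s t \<sigma> y x = Some (S A s t \<sigma> y x)" using xy by (simp add: star_of_def)
      show "star_of A s t \<sigma> (S A s t \<sigma> y x) (S A s t \<sigma> y z) = Some r"
        using p qq e by (simp add: star_of_def)
    qed
  qed
  have L: "left_nondeg_RC A s t (star_of A s t \<sigma>)"
    unfolding left_nondeg_RC_def
  proof (rule ballI)
    fix x assume x: "x \<in> A"
    have D: "\<forall>y\<in>{y \<in> A. s y = s x}. star_of A s t \<sigma> x y \<noteq> None"
      using x by (auto simp: star_of_def)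
    have b: "bij_betw (\<lambda>z. fst (\<sigma> (x, z))) {z \<in> A. s z = t x} {z \<in> A. s z = s x}"
      using assms(3) x unfolding left_nondeg_YB_def by blast
    have b2: "bij_betw (S A s t \<sigma> x) {z \<in> A. s z = s x} {z \<in> A. s z = t x}"
      by (rule bij_betw_inv_into[OF b])
    have "bij_betw (\<lambda>y. the (star_of A s t \<sigma> x y)) {y \<in> A. s y = s x} {z \<in> A. s z = t x}"
    proof (rule bij_betw_cong[THEN iffD1, OF _ b2])
      show "\<And>y. y \<in> {y \<in> A. s y = s x} \<Longrightarrow> S A s t \<sigma> x y = the (star_of A s t \<sigma> x y)"
        using x by (simp add: star_of_def)
    qed
    then show "(\<forall>y\<in>{y \<in> A. s y = s x}. star_of A s t \<sigma> x y \<noteq> None) \<and>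
        bij_betw (\<lambda>y. the (star_of A s t \<sigma> x y)) {y \<in> A. s y = s x} {z \<in> A. s z = t x}"
      using D by blast
  qed
  have C: "\<forall>x\<in>A. \<forall>y\<in>A. s x = s y \<longrightarrow> star_of A s t \<sigma> x y \<noteq> None"
    by (simp add: star_of_def)
  have "weak_RC_system Lam A s t (star_of A s t \<sigma>)"
    unfolding weak_RC_system_def using q W1 W2 W3 by (intro conjI)
  then show ?thesis using L C by blast
qed

end
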